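(* Let $D$ be an integral domain with quotient field $K$ and $n\ge1$. The set $\mathrm{Int}_{T_n(K)}(T_n(D))$ of right integer-valued polynomials and the set $\mathrm{Int}^{\ell}_{T_n(K)}(T_n(D))$ of left integer-valued polynomials on $T_n(D)$ with coefficients in $T_n(K)$ are subrings of $(T_n(K))[x]$.
   Context: $T_n(A)$ denotes the ring of upper triangular $n\times n$ matrices over a ring $A$; $(T_n(K))[x]$ is the polynomial ring in a central variable $x$ with coefficients in $T_n(K)$. For $f=\sum_k F_kx^k\in(T_n(K))[x]$ and $C\in T_n(K)$, right substitution is $f(C)=\sum_kF_kC^k$ and left substitution is $f(C)_\ell=\sum_kC^kF_k$. $\mathrm{Int}_{T_n(K)}(T_n(D))=\{f\in(T_n(K))[x]\mid\forall C\in T_n(D):\ f(C)\in T_n(D)\}$ and $\mathrm{Int}^{\ell}_{T_n(K)}(T_n(D))=\{f\in(T_n(K))[x]\mid\forall C\in T_n(D):\ f(C)_\ell\in T_n(D)\}$. *)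

theory Defs
  imports "Jordan_Normal_Form.Matrix" "HOL-Algebra.UnivPoly" "HOL-Algebra.Subrings"
begin

text \<open>D is a subring of the field 'k and 'k is its quotient field
  (every element of 'k is a quotient of elements of D). Being a subring of a
  field, D is an integral domain.\<close>
definition quotient_field_of :: "'k::field set \<Rightarrow> bool" where
  "quotient_field_of D \<longleftrightarrow>
     0 \<in> D \<and> 1 \<in> D \<and>
     (\<forall>a\<in>D. \<forall>b\<in>D. a + b \<in> D \<and> - a \<in> D \<and> a * b \<in> D) \<and>
     (\<forall>k. \<exists>a\<in>D. \<exists>b\<in>D. b \<noteq> 0 \<and> k = a / b)"

definition upper_tri_mats :: "nat \<Rightarrow> 'a::zero set \<Rightarrow> 'a mat set" where
  "upper_tri_mats n S = {A \<in> carrier_mat n n.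
      (\<forall>i<n. \<forall>j<n. A $$ (i, j) \<in> S) \<and> (\<forall>i<n. \<forall>j<i. A $$ (i, j) = 0)}"

definition Tn_ring :: "nat \<Rightarrow> 'a::comm_ring_1 mat ring" where
  "Tn_ring n = (ring_mat TYPE('a) n ()) \<lparr>carrier := upper_tri_mats n UNIV\<rparr>"

definition right_eval :: "('a, 'm) ring_scheme \<Rightarrow> (nat \<Rightarrow> 'a) \<Rightarrow> 'a \<Rightarrow> 'a" where
  "right_eval R f C = (\<Oplus>\<^bsub>R\<^esub> k\<in>{..deg R f}. f k \<otimes>\<^bsub>R\<^esub> C [^]\<^bsub>R\<^esub> k)"

definition left_eval :: "('a, 'm) ring_scheme \<Rightarrow> (nat \<Rightarrow> 'a) \<Rightarrow> 'a \<Rightarrow> 'a" where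
  "left_eval R f C = (\<Oplus>\<^bsub>R\<^esub> k\<in>{..deg R f}. C [^]\<^bsub>R\<^esub> k \<otimes>\<^bsub>R\<^esub> f k)"

definition Int_right :: "nat \<Rightarrow> 'k::field set \<Rightarrow> (nat \<Rightarrow> 'k mat) set" where
  "Int_right n D = {f \<in> carrier (UP (Tn_ring n)).
      \<forall>C \<in> upper_tri_mats n D. right_eval (Tn_ring n) f C \<in> upper_tri_mats n D}"

definition Int_left :: "nat \<Rightarrow> 'k::field set \<Rightarrow> (nat \<Rightarrow> 'k mat) set" where
  "Int_left n D = {f \<in> carrier (UP (Tn_ring n)).
      \<forall>C \<in> upper_tri_mats n D. left_eval (Tn_ring n) f C \<in> upper_tri_mats n D}"

end

theory Submission
  imports Defs
begin


definition rs :: "('a, 'm) ring_scheme \<Rightarrow> (nat \<Rightarrow> 'a) \<Rightarrow> nat \<Rightarrow> 'a \<Rightarrow> 'a" where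
  "rs R f N C = (\<Oplus>\<^bsub>R\<^esub> k\<in>{..N}. f k \<otimes>\<^bsub>R\<^esub> C [^]\<^bsub>R\<^esub> k)"
definition ls :: "('a, 'm) ring_scheme \<Rightarrow> (nat \<Rightarrow> 'a) \<Rightarrow> nat \<Rightarrow> 'a \<Rightarrow> 'a" where
  "ls R f N C = (\<Oplus>\<^bsub>R\<^esub> k\<in>{..N}. C [^]\<^bsub>R\<^esub> k \<otimes>\<^bsub>R\<^esub> f k)"
definition rmid :: "('a, 'm) ring_scheme \<Rightarrow> (nat \<Rightarrow> 'a) \<Rightarrow> 'a \<Rightarrow> nat \<Rightarrow> 'a \<Rightarrow> 'a" where
  "rmid R f X N C = (\<Oplus>\<^bsub>R\<^esub> k\<in>{..N}. f k \<otimes>\<^bsub>R\<^esub> X \<otimes>\<^bsub>R\<^esub> C [^]\<^bsub>R\<^esub> k)"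
definition lmid :: "('a, 'm) ring_scheme \<Rightarrow> (nat \<Rightarrow> 'a) \<Rightarrow> 'a \<Rightarrow> nat \<Rightarrow> 'a \<Rightarrow> 'a" where
  "lmid R g X N C = (\<Oplus>\<^bsub>R\<^esub> k\<in>{..N}. C [^]\<^bsub>R\<^esub> k \<otimes>\<^bsub>R\<^esub> X \<otimes>\<^bsub>R\<^esub> g k)"

context ring
begin

lemma finsum_stable:
  assumes "\<And>k. h k \<in> carrier R" "\<And>k. d < k \<Longrightarrow> h k = \<zero>" "d \<le> (N::nat)"
  shows "(\<Oplus>k\<in>{..N}. h k) = (\<Oplus>k\<in>{..d}. h k)"
  using assms(3)
proof (induction N rule: dec_induct)
  case base then show ?case by simp
next
  case (step N)
  have "(\<Oplus>k\<in>{..Suc N}. h k) = h (Suc N) \<oplus> (\<Oplus>k\<in>{..N}. h k)"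
    using assms(1) by (simp add: Pi_def)
  also have "\<dots> = (\<Oplus>k\<in>{..N}. h k)" using assms step by simp
  finally show ?case using step by simp
qed

lemma gen_diagonal:
  assumes F: "\<And>i j. F i j \<in> carrier R"
  shows "(\<Oplus>k \<in> {..N::nat}. \<Oplus>i \<in> {..k}. F i (k - i)) =
  (\<Oplus>k \<in> {..N}. \<Oplus>i \<in> {..N - k}. F k i)"
proof (induct N)
  case 0 then show ?case using F by (simp add: Pi_def)
next
  case (Suc j)
  from Suc show ?case
    by (simp cong: finsum_cong add: Suc_diff_le a_ac Pi_def F)
qed

lemma finsum_rev:
  assumes "\<And>i. h i \<in> carrier R"
  shows "(\<Oplus>i\<in>{..k::nat}. h i) = (\<Oplus>i\<in>{..k}. h (k - i))"
proof -
  have im: "(\<lambda>i. k - i) ` {..k} = {..k}"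
  proof (intro equalityI subsetI)
    fix x assume "x \<in> {..k}" then show "x \<in> (\<lambda>i. k - i) ` {..k}"
      by (intro image_eqI[where x="k - x"]) auto
  qed auto
  have inj: "inj_on (\<lambda>i. k - i) {..k}" by (auto simp: inj_on_def)
  have "(\<Oplus>i\<in>{..k}. h i) = (\<Oplus>i\<in>(\<lambda>i. k - i) ` {..k}. h i)" using im by simp
  also have "\<dots> = (\<Oplus>i\<in>{..k}. h (k - i))"
    by (rule finsum_reindex) (use assms inj in auto)
  finally show ?thesis .
qed

end

context UP_ring
begin

lemma coeff_eq: "p \<in> carrier P \<Longrightarrow> coeff P p n = p n" by (simp add: P_def UP_def)

lemma cc: "p \<in> carrier P \<Longrightarrow> p k \<in> carrier R"
  using coeff_closed coeff_eq by metis

lemma above: "p \<in> carrier P \<Longrightarrow> deg R p < k \<Longrightarrow> p k = \<zero>"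
  using deg_aboveD coeff_eq by metis

lemma re_closed: "p \<in> carrier P \<Longrightarrow> C \<in> carrier R \<Longrightarrow> right_eval R p C \<in> carrier R"
  unfolding right_eval_def by (rule R.finsum_closed) (auto simp: cc)
lemma le_closed: "p \<in> carrier P \<Longrightarrow> C \<in> carrier R \<Longrightarrow> left_eval R p C \<in> carrier R"
  unfolding left_eval_def by (rule R.finsum_closed) (auto simp: cc)

lemma rs_stable:
  assumes "p \<in> carrier P" "C \<in> carrier R" "deg R p \<le> N"
  shows "rs R p N C = right_eval R p C"
  unfolding rs_def right_eval_def
  by (rule R.finsum_stable) (use assms in \<open>auto simp: cc above\<close>)

lemma ls_stable:
  assumes "p \<in> carrier P" "C \<in> carrier R" "deg R p \<le> N"
  shows "ls R p N C = left_eval R p C"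
  unfolding ls_def left_eval_def
  by (rule R.finsum_stable) (use assms in \<open>auto simp: cc above\<close>)

lemma rmid_stable:
  assumes "p \<in> carrier P" "C \<in> carrier R" "X \<in> carrier R" "deg R p \<le> N"
  shows "rmid R p X N C = rmid R p X (deg R p) C"
  unfolding rmid_def
  by (rule R.finsum_stable) (use assms in \<open>auto simp: cc above\<close>)

lemma lmid_stable:
  assumes "p \<in> carrier P" "C \<in> carrier R" "X \<in> carrier R" "deg R p \<le> N"
  shows "lmid R p X N C = lmid R p X (deg R p) C"
  unfolding lmid_def
  by (rule R.finsum_stable) (use assms in \<open>auto simp: cc above\<close>)

lemma right_mult:
  assumes p: "p \<in> carrier P" and q: "q \<in> carrier P" and C: "C \<in> carrier R"
  shows "right_eval R (p \<otimes>\<^bsub>P\<^esub> q) C = rmid R p (right_eval R q C) (deg R p + deg R q) C"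
proof -
  let ?N = "deg R p + deg R q"
  have pq: "p \<otimes>\<^bsub>P\<^esub> q \<in> carrier P" using p q by simp
  have "right_eval R (p \<otimes>\<^bsub>P\<^esub> q) C = rs R (p \<otimes>\<^bsub>P\<^esub> q) ?N C"
    using rs_stable[OF pq C] deg_mult_ring[OF p q] by simp
  also have "\<dots> = (\<Oplus>k\<in>{..?N}. (\<Oplus>i\<in>{..k}. p i \<otimes> q (k - i)) \<otimes> C [^] k)"
    unfolding rs_def using p q coeff_mult[OF p q] coeff_eq by simp
  also have "\<dots> = (\<Oplus>k\<in>{..?N}. \<Oplus>i\<in>{..k}. p i \<otimes> q (k - i) \<otimes> C [^] (k - i) \<otimes> C [^] i)"
  proof (rule R.finsum_cong')
    fix k assume k: "k \<in> {..?N}"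
    have "(\<Oplus>i\<in>{..k}. p i \<otimes> q (k - i)) \<otimes> C [^] k = (\<Oplus>i\<in>{..k}. p i \<otimes> q (k - i) \<otimes> C [^] k)"
      by (rule R.finsum_ldistr) (use p q C cc in auto)
    also have "\<dots> = (\<Oplus>i\<in>{..k}. p i \<otimes> q (k - i) \<otimes> C [^] (k - i) \<otimes> C [^] i)"
    proof (rule R.finsum_cong')
      fix i assume i: "i \<in> {..k}"
      have "C [^] k = C [^] (k - i) \<otimes> C [^] i" using C i by (simp add: R.nat_pow_mult)
      then show "p i \<otimes> q (k - i) \<otimes> C [^] k = p i \<otimes> q (k - i) \<otimes> C [^] (k - i) \<otimes> C [^] i"
        using p q C cc by (simp add: R.m_assoc)
    qed (use p q C cc in auto)
    finally show "(\<Oplus>i\<in>{..k}. p i \<otimes> q (k - i)) \<otimes> C [^] k = (\<Oplus>i\<in>{..k}. p i \<otimes> q (k - i) \<otimes> C [^] (k - i) \<otimes> C [^] i)" .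
  qed (use p q C cc in auto)
  also have "\<dots> = (\<Oplus>k\<in>{..?N}. \<Oplus>j\<in>{..?N - k}. p k \<otimes> q j \<otimes> C [^] j \<otimes> C [^] k)"
    by (rule R.gen_diagonal[where F = "\<lambda>i j. p i \<otimes> q j \<otimes> C [^] j \<otimes> C [^] i"]) (use p q C cc in auto)
  also have "\<dots> = (\<Oplus>k\<in>{..?N}. p k \<otimes> right_eval R q C \<otimes> C [^] k)"
  proof (rule R.finsum_cong')
    fix k assume k: "k \<in> {..?N}"
    show "(\<Oplus>j\<in>{..?N - k}. p k \<otimes> q j \<otimes> C [^] j \<otimes> C [^] k) = p k \<otimes> right_eval R q C \<otimes> C [^] k"
    proof (cases "k \<le> deg R p")
      case True
      have "(\<Oplus>j\<in>{..?N - k}. p k \<otimes> q j \<otimes> C [^] j \<otimes> C [^] k)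
          = (\<Oplus>j\<in>{..?N - k}. p k \<otimes> (q j \<otimes> C [^] j)) \<otimes> C [^] k"
        by (subst R.finsum_ldistr) (use p q C cc in \<open>auto simp: R.m_assoc\<close>)
      also have "\<dots> = p k \<otimes> rs R q (?N - k) C \<otimes> C [^] k"
        unfolding rs_def by (subst R.finsum_rdistr) (use p q C cc in auto)
      also have "rs R q (?N - k) C = right_eval R q C"
        by (rule rs_stable) (use q C True in auto)
      finally show ?thesis .
    next
      case False
      then have "p k = \<zero>" using above p by simp
      then show ?thesis using q C cc re_closed by (simp add: R.finsum_zero)
    qed
  qed (use p q C cc re_closed in auto)
  finally show ?thesis unfolding rmid_def .
qed


lemma left_mult:
  assumes p: "p \<in> carrier P" and q: "q \<in> carrier P" and C: "C \<in> carrier R"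
  shows "left_eval R (p \<otimes>\<^bsub>P\<^esub> q) C = lmid R q (left_eval R p C) (deg R p + deg R q) C"
proof -
  let ?N = "deg R p + deg R q"
  have pq: "p \<otimes>\<^bsub>P\<^esub> q \<in> carrier P" using p q by simp
  have "left_eval R (p \<otimes>\<^bsub>P\<^esub> q) C = ls R (p \<otimes>\<^bsub>P\<^esub> q) ?N C"
    using ls_stable[OF pq C] deg_mult_ring[OF p q] by simp
  also have "\<dots> = (\<Oplus>k\<in>{..?N}. C [^] k \<otimes> (\<Oplus>i\<in>{..k}. p i \<otimes> q (k - i)))"
    unfolding ls_def using p q coeff_mult[OF p q] coeff_eq by simp
  also have "\<dots> = (\<Oplus>k\<in>{..?N}. \<Oplus>i\<in>{..k}. C [^] i \<otimes> C [^] (k - i) \<otimes> p (k - i) \<otimes> q i)"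
  proof (rule R.finsum_cong')
    fix k assume k: "k \<in> {..?N}"
    have "(\<Oplus>i\<in>{..k}. p i \<otimes> q (k - i)) = (\<Oplus>i\<in>{..k}. p (k - i) \<otimes> q (k - (k - i)))"
      by (rule R.finsum_rev) (use p q cc in auto)
    also have "\<dots> = (\<Oplus>i\<in>{..k}. p (k - i) \<otimes> q i)"
      by (rule R.finsum_cong') (use p q cc in auto)
    finally have e1: "(\<Oplus>i\<in>{..k}. p i \<otimes> q (k - i)) = (\<Oplus>i\<in>{..k}. p (k - i) \<otimes> q i)" .
    have "C [^] k \<otimes> (\<Oplus>i\<in>{..k}. p (k - i) \<otimes> q i) = (\<Oplus>i\<in>{..k}. C [^] k \<otimes> (p (k - i) \<otimes> q i))"
      by (rule R.finsum_rdistr) (use p q C cc in auto)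
    also have "\<dots> = (\<Oplus>i\<in>{..k}. C [^] i \<otimes> C [^] (k - i) \<otimes> p (k - i) \<otimes> q i)"
    proof (rule R.finsum_cong')
      fix i assume i: "i \<in> {..k}"
      have "C [^] k = C [^] i \<otimes> C [^] (k - i)" using C i by (simp add: R.nat_pow_mult)
      then show "C [^] k \<otimes> (p (k - i) \<otimes> q i) = C [^] i \<otimes> C [^] (k - i) \<otimes> p (k - i) \<otimes> q i"
        using p q C cc by (simp add: R.m_assoc)
    qed (use p q C cc in auto)
    finally show "C [^] k \<otimes> (\<Oplus>i\<in>{..k}. p i \<otimes> q (k - i)) = (\<Oplus>i\<in>{..k}. C [^] i \<otimes> C [^] (k - i) \<otimes> p (k - i) \<otimes> q i)"
      using e1 by simp
  qed (use p q C cc in auto)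
  also have "\<dots> = (\<Oplus>k\<in>{..?N}. \<Oplus>j\<in>{..?N - k}. C [^] k \<otimes> C [^] j \<otimes> p j \<otimes> q k)"
    by (rule R.gen_diagonal[where F = "\<lambda>a b. C [^] a \<otimes> C [^] b \<otimes> p b \<otimes> q a"]) (use p q C cc in auto)
  also have "\<dots> = (\<Oplus>k\<in>{..?N}. C [^] k \<otimes> left_eval R p C \<otimes> q k)"
  proof (rule R.finsum_cong')
    fix k assume k: "k \<in> {..?N}"
    show "(\<Oplus>j\<in>{..?N - k}. C [^] k \<otimes> C [^] j \<otimes> p j \<otimes> q k) = C [^] k \<otimes> left_eval R p C \<otimes> q k"
    proof (cases "k \<le> deg R q")
      case True
      have "(\<Oplus>j\<in>{..?N - k}. C [^] k \<otimes> C [^] j \<otimes> p j \<otimes> q k)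
          = (\<Oplus>j\<in>{..?N - k}. C [^] k \<otimes> (C [^] j \<otimes> p j)) \<otimes> q k"
        by (subst R.finsum_ldistr) (use p q C cc in \<open>auto simp: R.m_assoc\<close>)
      also have "\<dots> = C [^] k \<otimes> ls R p (?N - k) C \<otimes> q k"
        unfolding ls_def by (subst R.finsum_rdistr) (use p q C cc in auto)
      also have "ls R p (?N - k) C = left_eval R p C"
        by (rule ls_stable) (use p C True in auto)
      finally show ?thesis .
    next
      case False
      then have "q k = \<zero>" using above q by simp
      then show ?thesis using p C cc le_closed by (simp add: R.finsum_zero)
    qed
  qed (use p q C cc le_closed in auto)
  finally show ?thesis unfolding lmid_def .
qed


lemma padd: "p \<in> carrier P \<Longrightarrow> q \<in> carrier P \<Longrightarrow> (p \<oplus>\<^bsub>P\<^esub> q) k = p k \<oplus> q k"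
  using coeff_add[of p q k] coeff_eq[of p] coeff_eq[of q] coeff_eq[of "p \<oplus>\<^bsub>P\<^esub> q"] by simp
lemma pzero: "\<zero>\<^bsub>P\<^esub> k = \<zero>"
  using coeff_zero[of k] coeff_eq[of "\<zero>\<^bsub>P\<^esub>"] by simp
lemma pone: "\<one>\<^bsub>P\<^esub> k = (if k = 0 then \<one> else \<zero>)"
  using coeff_one[of k] coeff_eq[of "\<one>\<^bsub>P\<^esub>"] by simp

lemma rs_add:
  assumes p: "p \<in> carrier P" and q: "q \<in> carrier P" and C: "C \<in> carrier R"
  shows "rs R (p \<oplus>\<^bsub>P\<^esub> q) N C = rs R p N C \<oplus> rs R q N C"
proof -
  have "rs R (p \<oplus>\<^bsub>P\<^esub> q) N C = (\<Oplus>k\<in>{..N}. p k \<otimes> C [^] k \<oplus> q k \<otimes> C [^] k)"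
    unfolding rs_def
    by (rule R.finsum_cong') (use p q C cc in \<open>auto simp: R.l_distr padd\<close>)
  also have "\<dots> = rs R p N C \<oplus> rs R q N C"
    unfolding rs_def by (rule R.finsum_addf) (use p q C cc in auto)
  finally show ?thesis .
qed

lemma ls_add:
  assumes p: "p \<in> carrier P" and q: "q \<in> carrier P" and C: "C \<in> carrier R"
  shows "ls R (p \<oplus>\<^bsub>P\<^esub> q) N C = ls R p N C \<oplus> ls R q N C"
proof -
  have "ls R (p \<oplus>\<^bsub>P\<^esub> q) N C = (\<Oplus>k\<in>{..N}. C [^] k \<otimes> p k \<oplus> C [^] k \<otimes> q k)"
    unfolding ls_def
    by (rule R.finsum_cong') (use p q C cc in \<open>auto simp: R.r_distr padd\<close>)
  also have "\<dots> = ls R p N C \<oplus> ls R q N C"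
    unfolding ls_def by (rule R.finsum_addf) (use p q C cc in auto)
  finally show ?thesis .
qed

lemma rs_zero: "C \<in> carrier R \<Longrightarrow> rs R \<zero>\<^bsub>P\<^esub> N C = \<zero>"
  unfolding rs_def by (simp add: R.finsum_zero pzero)
lemma ls_zero: "C \<in> carrier R \<Longrightarrow> ls R \<zero>\<^bsub>P\<^esub> N C = \<zero>"
  unfolding ls_def by (simp add: R.finsum_zero pzero)

lemma rs_closed: "p \<in> carrier P \<Longrightarrow> C \<in> carrier R \<Longrightarrow> rs R p N C \<in> carrier R"
  unfolding rs_def by (rule R.finsum_closed) (auto simp: cc)
lemma ls_closed: "p \<in> carrier P \<Longrightarrow> C \<in> carrier R \<Longrightarrow> ls R p N C \<in> carrier R"
  unfolding ls_def by (rule R.finsum_closed) (auto simp: cc)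

lemma right_add:
  assumes p: "p \<in> carrier P" and q: "q \<in> carrier P" and C: "C \<in> carrier R"
  shows "right_eval R (p \<oplus>\<^bsub>P\<^esub> q) C = right_eval R p C \<oplus> right_eval R q C"
proof -
  let ?N = "max (deg R p) (deg R q)"
  have "right_eval R (p \<oplus>\<^bsub>P\<^esub> q) C = rs R (p \<oplus>\<^bsub>P\<^esub> q) ?N C"
    using rs_stable[of "p \<oplus>\<^bsub>P\<^esub> q" C ?N] p q C deg_add[OF p q] by simp
  also have "\<dots> = rs R p ?N C \<oplus> rs R q ?N C" by (rule rs_add[OF p q C])
  also have "\<dots> = right_eval R p C \<oplus> right_eval R q C"
    using rs_stable[OF p C, of ?N] rs_stable[OF q C, of ?N] by simp
  finally show ?thesis .
qed

lemma left_add: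
  assumes p: "p \<in> carrier P" and q: "q \<in> carrier P" and C: "C \<in> carrier R"
  shows "left_eval R (p \<oplus>\<^bsub>P\<^esub> q) C = left_eval R p C \<oplus> left_eval R q C"
proof -
  let ?N = "max (deg R p) (deg R q)"
  have "left_eval R (p \<oplus>\<^bsub>P\<^esub> q) C = ls R (p \<oplus>\<^bsub>P\<^esub> q) ?N C"
    using ls_stable[of "p \<oplus>\<^bsub>P\<^esub> q" C ?N] p q C deg_add[OF p q] by simp
  also have "\<dots> = ls R p ?N C \<oplus> ls R q ?N C" by (rule ls_add[OF p q C])
  also have "\<dots> = left_eval R p C \<oplus> left_eval R q C"
    using ls_stable[OF p C, of ?N] ls_stable[OF q C, of ?N] by simp
  finally show ?thesis .
qed

lemma right_neg:
  assumes p: "p \<in> carrier P" and C: "C \<in> carrier R"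
  shows "right_eval R (\<ominus>\<^bsub>P\<^esub> p) C = \<ominus> right_eval R p C"
proof -
  have np: "\<ominus>\<^bsub>P\<^esub> p \<in> carrier P" using p by simp
  have "right_eval R (\<ominus>\<^bsub>P\<^esub> p) C \<oplus> right_eval R p C = right_eval R (\<ominus>\<^bsub>P\<^esub> p \<oplus>\<^bsub>P\<^esub> p) C"
    using right_add[OF np p C] by simp
  also have "\<dots> = \<zero>" using p C by (simp add: right_eval_def pzero P.l_neg)
  finally show ?thesis using R.minus_equality re_closed np p C by metis
qed

lemma left_neg:
  assumes p: "p \<in> carrier P" and C: "C \<in> carrier R"
  shows "left_eval R (\<ominus>\<^bsub>P\<^esub> p) C = \<ominus> left_eval R p C"
proof -
  have np: "\<ominus>\<^bsub>P\<^esub> p \<in> carrier P" using p by simp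
  have "left_eval R (\<ominus>\<^bsub>P\<^esub> p) C \<oplus> left_eval R p C = left_eval R (\<ominus>\<^bsub>P\<^esub> p \<oplus>\<^bsub>P\<^esub> p) C"
    using left_add[OF np p C] by simp
  also have "\<dots> = \<zero>" using p C by (simp add: left_eval_def pzero P.l_neg)
  finally show ?thesis using R.minus_equality le_closed np p C by metis
qed

lemma right_one: "C \<in> carrier R \<Longrightarrow> right_eval R \<one>\<^bsub>P\<^esub> C = \<one>"
  unfolding right_eval_def by (simp add: pone)
lemma left_one: "C \<in> carrier R \<Longrightarrow> left_eval R \<one>\<^bsub>P\<^esub> C = \<one>"
  unfolding left_eval_def by (simp add: pone)


lemma rmid_add:
  assumes p: "p \<in> carrier P" and X: "X \<in> carrier R" and Y: "Y \<in> carrier R" and C: "C \<in> carrier R"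
  shows "rmid R p (X \<oplus> Y) N C = rmid R p X N C \<oplus> rmid R p Y N C"
proof -
  have "rmid R p (X \<oplus> Y) N C = (\<Oplus>k\<in>{..N}. p k \<otimes> X \<otimes> C [^] k \<oplus> p k \<otimes> Y \<otimes> C [^] k)"
    unfolding rmid_def
    by (rule R.finsum_cong') (use p X Y C cc in \<open>auto simp: R.l_distr R.r_distr\<close>)
  also have "\<dots> = rmid R p X N C \<oplus> rmid R p Y N C"
    unfolding rmid_def by (rule R.finsum_addf) (use p X Y C cc in auto)
  finally show ?thesis .
qed

lemma lmid_add:
  assumes p: "p \<in> carrier P" and X: "X \<in> carrier R" and Y: "Y \<in> carrier R" and C: "C \<in> carrier R"
  shows "lmid R p (X \<oplus> Y) N C = lmid R p X N C \<oplus> lmid R p Y N C"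
proof -
  have "lmid R p (X \<oplus> Y) N C = (\<Oplus>k\<in>{..N}. C [^] k \<otimes> X \<otimes> p k \<oplus> C [^] k \<otimes> Y \<otimes> p k)"
    unfolding lmid_def
    by (rule R.finsum_cong') (use p X Y C cc in \<open>auto simp: R.l_distr R.r_distr\<close>)
  also have "\<dots> = lmid R p X N C \<oplus> lmid R p Y N C"
    unfolding lmid_def by (rule R.finsum_addf) (use p X Y C cc in auto)
  finally show ?thesis .
qed

lemma rmid_closed: "p \<in> carrier P \<Longrightarrow> X \<in> carrier R \<Longrightarrow> C \<in> carrier R \<Longrightarrow> rmid R p X N C \<in> carrier R"
  unfolding rmid_def by (rule R.finsum_closed) (auto simp: cc)
lemma lmid_closed: "p \<in> carrier P \<Longrightarrow> X \<in> carrier R \<Longrightarrow> C \<in> carrier R \<Longrightarrow> lmid R p X N C \<in> carrier R"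
  unfolding lmid_def by (rule R.finsum_closed) (auto simp: cc)

lemma rmid_zero: "p \<in> carrier P \<Longrightarrow> C \<in> carrier R \<Longrightarrow> rmid R p \<zero> N C = \<zero>"
  unfolding rmid_def by (simp add: R.finsum_zero cc)
lemma lmid_zero: "p \<in> carrier P \<Longrightarrow> C \<in> carrier R \<Longrightarrow> lmid R p \<zero> N C = \<zero>"
  unfolding lmid_def by (simp add: R.finsum_zero cc)

lemma rmid_minus:
  assumes p: "p \<in> carrier P" and X: "X \<in> carrier R" and Y: "Y \<in> carrier R" and C: "C \<in> carrier R"
  shows "rmid R p (X \<ominus> Y) N C = rmid R p X N C \<ominus> rmid R p Y N C"
proof -
  have "rmid R p (X \<ominus> Y) N C \<oplus> rmid R p Y N C = rmid R p (X \<ominus> Y \<oplus> Y) N C"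
    using rmid_add[OF p _ Y C, of "X \<ominus> Y"] X Y by simp
  also have "X \<ominus> Y \<oplus> Y = X" using X Y by (simp add: a_minus_def R.a_assoc R.r_neg R.l_neg)
  finally have e: "rmid R p (X \<ominus> Y) N C \<oplus> rmid R p Y N C = rmid R p X N C" .
  have c: "rmid R p (X \<ominus> Y) N C \<in> carrier R" "rmid R p Y N C \<in> carrier R"
    using rmid_closed p X Y C by auto
  have "rmid R p X N C \<ominus> rmid R p Y N C = (rmid R p (X \<ominus> Y) N C \<oplus> rmid R p Y N C) \<ominus> rmid R p Y N C"
    using e by simp
  also have "\<dots> = rmid R p (X \<ominus> Y) N C" using c by (simp add: a_minus_def R.a_assoc R.r_neg R.l_neg)
  finally show ?thesis by simp
qed

lemma lmid_minus:
  assumes p: "p \<in> carrier P" and X: "X \<in> carrier R" and Y: "Y \<in> carrier R" and C: "C \<in> carrier R"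
  shows "lmid R p (X \<ominus> Y) N C = lmid R p X N C \<ominus> lmid R p Y N C"
proof -
  have "lmid R p (X \<ominus> Y) N C \<oplus> lmid R p Y N C = lmid R p (X \<ominus> Y \<oplus> Y) N C"
    using lmid_add[OF p _ Y C, of "X \<ominus> Y"] X Y by simp
  also have "X \<ominus> Y \<oplus> Y = X" using X Y by (simp add: a_minus_def R.a_assoc R.r_neg R.l_neg)
  finally have e: "lmid R p (X \<ominus> Y) N C \<oplus> lmid R p Y N C = lmid R p X N C" .
  have c: "lmid R p (X \<ominus> Y) N C \<in> carrier R" "lmid R p Y N C \<in> carrier R"
    using lmid_closed p X Y C by auto
  have "lmid R p X N C \<ominus> lmid R p Y N C = (lmid R p (X \<ominus> Y) N C \<oplus> lmid R p Y N C) \<ominus> lmid R p Y N C"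
    using e by simp
  also have "\<dots> = lmid R p (X \<ominus> Y) N C" using c by (simp add: a_minus_def R.a_assoc R.r_neg R.l_neg)
  finally show ?thesis by simp
qed

lemma rmid_finsum:
  assumes p: "p \<in> carrier P" and C: "C \<in> carrier R" and A: "finite A" and h: "h \<in> A \<rightarrow> carrier R"
  shows "rmid R p (finsum R h A) N C = (\<Oplus>a\<in>A. rmid R p (h a) N C)"
  using A h
proof (induction A rule: finite_induct)
  case empty then show ?case using rmid_zero[OF p C] by simp
next
  case (insert x F)
  then have hx: "h x \<in> carrier R" and hF: "h \<in> F \<rightarrow> carrier R" by auto
  have "rmid R p (finsum R h (insert x F)) N C = rmid R p (h x \<oplus> finsum R h F) N C"
    using insert hx hF by (simp add: R.finsum_insert)
  also have "\<dots> = rmid R p (h x) N C \<oplus> rmid R p (finsum R h F) N C"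
    using rmid_add[OF p hx _ C] R.finsum_closed[OF hF] by simp
  also have "\<dots> = (\<Oplus>a\<in>insert x F. rmid R p (h a) N C)"
    using insert hF hx rmid_closed[OF p _ C] by (subst R.finsum_insert) (auto simp: Pi_def)
  finally show ?case .
qed

lemma lmid_finsum:
  assumes p: "p \<in> carrier P" and C: "C \<in> carrier R" and A: "finite A" and h: "h \<in> A \<rightarrow> carrier R"
  shows "lmid R p (finsum R h A) N C = (\<Oplus>a\<in>A. lmid R p (h a) N C)"
  using A h
proof (induction A rule: finite_induct)
  case empty then show ?case using lmid_zero[OF p C] by simp
next
  case (insert x F)
  then have hx: "h x \<in> carrier R" and hF: "h \<in> F \<rightarrow> carrier R" by auto
  have "lmid R p (finsum R h (insert x F)) N C = lmid R p (h x \<oplus> finsum R h F) N C"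
    using insert hx hF by (simp add: R.finsum_insert)
  also have "\<dots> = lmid R p (h x) N C \<oplus> lmid R p (finsum R h F) N C"
    using lmid_add[OF p hx _ C] R.finsum_closed[OF hF] by simp
  also have "\<dots> = (\<Oplus>a\<in>insert x F. lmid R p (h a) N C)"
    using insert hF hx lmid_closed[OF p _ C] by (subst R.finsum_insert) (auto simp: Pi_def)
  finally show ?case .
qed

lemma rmid_inter:
  assumes p: "p \<in> carrier P" and C: "C \<in> carrier R" and X: "X \<in> carrier R" and M: "M \<in> carrier R"
    and XC: "X \<otimes> C = M \<otimes> X" and N: "deg R p \<le> N"
  shows "rmid R p X N C = right_eval R p M \<otimes> X"
proof -
  have pw: "X \<otimes> C [^] k = M [^] k \<otimes> X" for k :: nat
  proof (induction k)
    case 0 then show ?case using X by simp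
  next
    case (Suc k)
    have "X \<otimes> C [^] Suc k = X \<otimes> C [^] k \<otimes> C" using X C by (simp add: R.m_assoc)
    also have "\<dots> = M [^] k \<otimes> (X \<otimes> C)" using Suc X C M by (simp add: R.m_assoc)
    also have "\<dots> = M [^] Suc k \<otimes> X" using XC X C M by (simp add: R.m_assoc)
    finally show ?case .
  qed
  have "rmid R p X N C = (\<Oplus>k\<in>{..N}. p k \<otimes> M [^] k \<otimes> X)"
    unfolding rmid_def
    by (rule R.finsum_cong') (use p X C M pw cc in \<open>auto simp: R.m_assoc\<close>)
  also have "\<dots> = rs R p N M \<otimes> X"
    unfolding rs_def by (rule R.finsum_ldistr[symmetric]) (use p X M cc in auto)
  also have "\<dots> = right_eval R p M \<otimes> X" using rs_stable[OF p M N] by simp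
  finally show ?thesis .
qed

lemma lmid_inter:
  assumes p: "p \<in> carrier P" and C: "C \<in> carrier R" and X: "X \<in> carrier R" and M: "M \<in> carrier R"
    and XC: "C \<otimes> X = X \<otimes> M" and N: "deg R p \<le> N"
  shows "lmid R p X N C = X \<otimes> left_eval R p M"
proof -
  have pw: "C [^] k \<otimes> X = X \<otimes> M [^] k" for k :: nat
  proof (induction k)
    case 0 then show ?case using X by simp
  next
    case (Suc k)
    have "C [^] Suc k \<otimes> X = C [^] k \<otimes> (C \<otimes> X)" using X C by (simp add: R.m_assoc)
    also have "\<dots> = (C [^] k \<otimes> X) \<otimes> M" using XC X C M by (simp add: R.m_assoc)
    also have "\<dots> = X \<otimes> M [^] Suc k" using Suc X C M by (simp add: R.m_assoc)
    finally show ?case .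
  qed
  have "lmid R p X N C = (\<Oplus>k\<in>{..N}. X \<otimes> (M [^] k \<otimes> p k))"
    unfolding lmid_def
    by (rule R.finsum_cong') (use p X C M pw cc in \<open>auto simp: R.m_assoc\<close>)
  also have "\<dots> = X \<otimes> ls R p N M"
    unfolding ls_def by (rule R.finsum_rdistr[symmetric]) (use p X M cc in auto)
  also have "\<dots> = X \<otimes> left_eval R p M" using ls_stable[OF p M N] by simp
  finally show ?thesis .
qed


lemma S_finsum:
  assumes Ssub: "S \<subseteq> carrier R" and S0: "\<zero> \<in> S" and Sadd: "\<And>x y. x \<in> S \<Longrightarrow> y \<in> S \<Longrightarrow> x \<oplus> y \<in> S"
    and A: "finite A" and h: "\<forall>a\<in>A. h a \<in> S"
  shows "finsum R h A \<in> S"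
  using A h
proof (induction A rule: finite_induct)
  case empty then show ?case using S0 by simp
next
  case (insert x F)
  then have "finsum R h (insert x F) = h x \<oplus> finsum R h F"
    using Ssub by (intro R.finsum_insert) auto
  then show ?case using insert Sadd by auto
qed

theorem abstract_right:
  assumes Ssub: "S \<subseteq> carrier R" and S1: "\<one> \<in> S"
    and Sadd: "\<And>x y. x \<in> S \<Longrightarrow> y \<in> S \<Longrightarrow> x \<oplus> y \<in> S"
    and Smul: "\<And>x y. x \<in> S \<Longrightarrow> y \<in> S \<Longrightarrow> x \<otimes> y \<in> S"
    and Sneg: "\<And>x. x \<in> S \<Longrightarrow> \<ominus> x \<in> S"
    and dec: "\<And>B C. B \<in> S \<Longrightarrow> C \<in> S \<Longrightarrow> \<exists>(A::(nat\<times>nat) set) h1 h2. finite A \<and>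
       (\<forall>a\<in>A. h1 a \<in> S \<and> h2 a \<in> S \<and> (\<exists>M\<in>S. h1 a \<otimes> C = M \<otimes> h1 a) \<and> (\<exists>M\<in>S. h2 a \<otimes> C = M \<otimes> h2 a))
       \<and> B = (\<Oplus>a\<in>A. h1 a \<ominus> h2 a)"
  shows "subring {f \<in> carrier P. \<forall>C\<in>S. right_eval R f C \<in> S} P"
proof (rule P.subringI)
  have S0: "\<zero> \<in> S" using Sadd[OF S1 Sneg[OF S1]] S1 Ssub by (simp add: R.r_neg)
  show "{f \<in> carrier P. \<forall>C\<in>S. right_eval R f C \<in> S} \<subseteq> carrier P" by auto
  show "\<one>\<^bsub>P\<^esub> \<in> {f \<in> carrier P. \<forall>C\<in>S. right_eval R f C \<in> S}"
    using S1 Ssub right_one by (simp add: subset_iff)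
  show "\<ominus>\<^bsub>P\<^esub> h \<in> {f \<in> carrier P. \<forall>C\<in>S. right_eval R f C \<in> S}"
    if "h \<in> {f \<in> carrier P. \<forall>C\<in>S. right_eval R f C \<in> S}" for h
  proof -
    have h: "h \<in> carrier P" "\<forall>C\<in>S. right_eval R h C \<in> S" using that by auto
    have "right_eval R (\<ominus>\<^bsub>P\<^esub> h) C \<in> S" if "C \<in> S" for C
      using right_neg[OF h(1), of C] that Ssub h(2) Sneg by (auto simp del: coeff_a_inv)
    then show ?thesis using h by simp
  qed
  show "h1 \<oplus>\<^bsub>P\<^esub> h2 \<in> {f \<in> carrier P. \<forall>C\<in>S. right_eval R f C \<in> S}"
    if "h1 \<in> {f \<in> carrier P. \<forall>C\<in>S. right_eval R f C \<in> S}" "h2 \<in> {f \<in> carrier P. \<forall>C\<in>S. right_eval R f C \<in> S}" for h1 h2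
  proof -
    have h: "h1 \<in> carrier P" "\<forall>C\<in>S. right_eval R h1 C \<in> S" "h2 \<in> carrier P" "\<forall>C\<in>S. right_eval R h2 C \<in> S" using that by auto
    have "right_eval R (h1 \<oplus>\<^bsub>P\<^esub> h2) C \<in> S" if "C \<in> S" for C
      using right_add[OF h(1) h(3), of C] that Ssub h(2,4) Sadd by (auto simp del: coeff_add)
    then show ?thesis using h by simp
  qed
  show "p \<otimes>\<^bsub>P\<^esub> q \<in> {f \<in> carrier P. \<forall>C\<in>S. right_eval R f C \<in> S}"
    if pI: "p \<in> {f \<in> carrier P. \<forall>C\<in>S. right_eval R f C \<in> S}" and qI: "q \<in> {f \<in> carrier P. \<forall>C\<in>S. right_eval R f C \<in> S}" for p q
  proof -
    have p: "p \<in> carrier P" and q: "q \<in> carrier P" using pI qI by auto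
    have "right_eval R (p \<otimes>\<^bsub>P\<^esub> q) C \<in> S" if CS: "C \<in> S" for C
    proof -
      have C: "C \<in> carrier R" using CS Ssub by auto
      let ?N = "deg R p + deg R q"
      let ?B = "right_eval R q C"
      have BS: "?B \<in> S" using qI CS by auto
      obtain A :: "(nat\<times>nat) set" and h1 h2 where H: "finite A \<and>
        (\<forall>a\<in>A. h1 a \<in> S \<and> h2 a \<in> S \<and> (\<exists>M\<in>S. h1 a \<otimes> C = M \<otimes> h1 a) \<and> (\<exists>M\<in>S. h2 a \<otimes> C = M \<otimes> h2 a))
        \<and> ?B = (\<Oplus>a\<in>A. h1 a \<ominus> h2 a)"
        using dec[OF BS CS] by blast
      have A: "finite A" using H by (rule conjunct1)
      have hA: "\<forall>a\<in>A. h1 a \<in> S \<and> h2 a \<in> S \<and> (\<exists>M\<in>S. h1 a \<otimes> C = M \<otimes> h1 a) \<and> (\<exists>M\<in>S. h2 a \<otimes> C = M \<otimes> h2 a)"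
        using H by (rule conjunct2[THEN conjunct1])
      have B: "?B = (\<Oplus>a\<in>A. h1 a \<ominus> h2 a)" using H by (rule conjunct2[THEN conjunct2])
      have hc: "(\<lambda>a. h1 a \<ominus> h2 a) \<in> A \<rightarrow> carrier R"
      proof
        fix a assume "a \<in> A"
        then have "h1 a \<in> carrier R" "h2 a \<in> carrier R" using hA Ssub by blast+
        then show "h1 a \<ominus> h2 a \<in> carrier R" by (rule R.minus_closed)
      qed
      have "right_eval R (p \<otimes>\<^bsub>P\<^esub> q) C = rmid R p ?B ?N C" by (rule right_mult[OF p q C])
      also have "\<dots> = (\<Oplus>a\<in>A. rmid R p (h1 a \<ominus> h2 a) ?N C)"
        unfolding B by (rule rmid_finsum[OF p C A hc])
      finally have eq: "right_eval R (p \<otimes>\<^bsub>P\<^esub> q) C = (\<Oplus>a\<in>A. rmid R p (h1 a \<ominus> h2 a) ?N C)" .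
      have all: "\<forall>a\<in>A. rmid R p (h1 a \<ominus> h2 a) ?N C \<in> S"
      proof (intro ballI)
        fix a assume a: "a \<in> A"
        have h1: "h1 a \<in> S" and h2: "h2 a \<in> S" using hA a by blast+
        obtain M1 where M1: "M1 \<in> S" "h1 a \<otimes> C = M1 \<otimes> h1 a" using hA a by blast
        obtain M2 where M2: "M2 \<in> S" "h2 a \<otimes> C = M2 \<otimes> h2 a" using hA a by blast
        have "rmid R p (h1 a \<ominus> h2 a) ?N C = rmid R p (h1 a) ?N C \<ominus> rmid R p (h2 a) ?N C"
          using rmid_minus[OF p _ _ C, of "h1 a" "h2 a"] h1 h2 Ssub by (simp add: subset_iff)
        also have "\<dots> = right_eval R p M1 \<otimes> h1 a \<ominus> right_eval R p M2 \<otimes> h2 a"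
        proof -
          have c: "h1 a \<in> carrier R" "h2 a \<in> carrier R" "M1 \<in> carrier R" "M2 \<in> carrier R"
            using h1 h2 M1 M2 Ssub by blast+
          show ?thesis using rmid_inter[OF p C c(1) c(3) M1(2)] rmid_inter[OF p C c(2) c(4) M2(2)] by simp
        qed
        also have "\<dots> \<in> S"
          unfolding a_minus_def using pI M1 M2 h1 h2 by (intro Sadd Sneg Smul) auto
        finally show "rmid R p (h1 a \<ominus> h2 a) ?N C \<in> S" .
      qed
      have "(\<Oplus>a\<in>A. rmid R p (h1 a \<ominus> h2 a) ?N C) \<in> S" by (rule S_finsum[OF Ssub S0 Sadd A all])
      then show ?thesis using eq by simp
    qed
    then show ?thesis using p q P.m_closed by blast
  qed
qed

theorem abstract_left:
  assumes Ssub: "S \<subseteq> carrier R" and S1: "\<one> \<in> S"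
    and Sadd: "\<And>x y. x \<in> S \<Longrightarrow> y \<in> S \<Longrightarrow> x \<oplus> y \<in> S"
    and Smul: "\<And>x y. x \<in> S \<Longrightarrow> y \<in> S \<Longrightarrow> x \<otimes> y \<in> S"
    and Sneg: "\<And>x. x \<in> S \<Longrightarrow> \<ominus> x \<in> S"
    and dec: "\<And>B C. B \<in> S \<Longrightarrow> C \<in> S \<Longrightarrow> \<exists>(A::(nat\<times>nat) set) h1 h2. finite A \<and>
       (\<forall>a\<in>A. h1 a \<in> S \<and> h2 a \<in> S \<and> (\<exists>M\<in>S. C \<otimes> h1 a = h1 a \<otimes> M) \<and> (\<exists>M\<in>S. C \<otimes> h2 a = h2 a \<otimes> M))
       \<and> B = (\<Oplus>a\<in>A. h1 a \<ominus> h2 a)"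
  shows "subring {f \<in> carrier P. \<forall>C\<in>S. left_eval R f C \<in> S} P"
proof (rule P.subringI)
  have S0: "\<zero> \<in> S" using Sadd[OF S1 Sneg[OF S1]] S1 Ssub by (simp add: R.r_neg)
  show "{f \<in> carrier P. \<forall>C\<in>S. left_eval R f C \<in> S} \<subseteq> carrier P" by auto
  show "\<one>\<^bsub>P\<^esub> \<in> {f \<in> carrier P. \<forall>C\<in>S. left_eval R f C \<in> S}"
    using S1 Ssub left_one by (simp add: subset_iff)
  show "\<ominus>\<^bsub>P\<^esub> h \<in> {f \<in> carrier P. \<forall>C\<in>S. left_eval R f C \<in> S}"
    if "h \<in> {f \<in> carrier P. \<forall>C\<in>S. left_eval R f C \<in> S}" for h
  proof -
    have h: "h \<in> carrier P" "\<forall>C\<in>S. left_eval R h C \<in> S" using that by auto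
    have "left_eval R (\<ominus>\<^bsub>P\<^esub> h) C \<in> S" if "C \<in> S" for C
      using left_neg[OF h(1), of C] that Ssub h(2) Sneg by (auto simp del: coeff_a_inv)
    then show ?thesis using h by simp
  qed
  show "h1 \<oplus>\<^bsub>P\<^esub> h2 \<in> {f \<in> carrier P. \<forall>C\<in>S. left_eval R f C \<in> S}"
    if "h1 \<in> {f \<in> carrier P. \<forall>C\<in>S. left_eval R f C \<in> S}" "h2 \<in> {f \<in> carrier P. \<forall>C\<in>S. left_eval R f C \<in> S}" for h1 h2
  proof -
    have h: "h1 \<in> carrier P" "\<forall>C\<in>S. left_eval R h1 C \<in> S" "h2 \<in> carrier P" "\<forall>C\<in>S. left_eval R h2 C \<in> S" using that by auto
    have "left_eval R (h1 \<oplus>\<^bsub>P\<^esub> h2) C \<in> S" if "C \<in> S" for C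
      using left_add[OF h(1) h(3), of C] that Ssub h(2,4) Sadd by (auto simp del: coeff_add)
    then show ?thesis using h by simp
  qed
  show "p \<otimes>\<^bsub>P\<^esub> q \<in> {f \<in> carrier P. \<forall>C\<in>S. left_eval R f C \<in> S}"
    if pI: "p \<in> {f \<in> carrier P. \<forall>C\<in>S. left_eval R f C \<in> S}" and qI: "q \<in> {f \<in> carrier P. \<forall>C\<in>S. left_eval R f C \<in> S}" for p q
  proof -
    have p: "p \<in> carrier P" and q: "q \<in> carrier P" using pI qI by auto
    have "left_eval R (p \<otimes>\<^bsub>P\<^esub> q) C \<in> S" if CS: "C \<in> S" for C
    proof -
      have C: "C \<in> carrier R" using CS Ssub by auto
      let ?N = "deg R p + deg R q"
      let ?B = "left_eval R p C"
      have BS: "?B \<in> S" using pI CS by auto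
      obtain A :: "(nat\<times>nat) set" and h1 h2 where H: "finite A \<and>
        (\<forall>a\<in>A. h1 a \<in> S \<and> h2 a \<in> S \<and> (\<exists>M\<in>S. C \<otimes> h1 a = h1 a \<otimes> M) \<and> (\<exists>M\<in>S. C \<otimes> h2 a = h2 a \<otimes> M))
        \<and> ?B = (\<Oplus>a\<in>A. h1 a \<ominus> h2 a)"
        using dec[OF BS CS] by blast
      have A: "finite A" using H by (rule conjunct1)
      have hA: "\<forall>a\<in>A. h1 a \<in> S \<and> h2 a \<in> S \<and> (\<exists>M\<in>S. C \<otimes> h1 a = h1 a \<otimes> M) \<and> (\<exists>M\<in>S. C \<otimes> h2 a = h2 a \<otimes> M)"
        using H by (rule conjunct2[THEN conjunct1])
      have B: "?B = (\<Oplus>a\<in>A. h1 a \<ominus> h2 a)" using H by (rule conjunct2[THEN conjunct2])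
      have hc: "(\<lambda>a. h1 a \<ominus> h2 a) \<in> A \<rightarrow> carrier R"
      proof
        fix a assume "a \<in> A"
        then have "h1 a \<in> carrier R" "h2 a \<in> carrier R" using hA Ssub by blast+
        then show "h1 a \<ominus> h2 a \<in> carrier R" by (rule R.minus_closed)
      qed
      have dq: "deg R q \<le> ?N" by simp
      have "left_eval R (p \<otimes>\<^bsub>P\<^esub> q) C = lmid R q ?B ?N C" by (rule left_mult[OF p q C])
      also have "\<dots> = (\<Oplus>a\<in>A. lmid R q (h1 a \<ominus> h2 a) ?N C)"
        unfolding B by (rule lmid_finsum[OF q C A hc])
      finally have eq: "left_eval R (p \<otimes>\<^bsub>P\<^esub> q) C = (\<Oplus>a\<in>A. lmid R q (h1 a \<ominus> h2 a) ?N C)" .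
      have all: "\<forall>a\<in>A. lmid R q (h1 a \<ominus> h2 a) ?N C \<in> S"
      proof (intro ballI)
        fix a assume a: "a \<in> A"
        have h1: "h1 a \<in> S" and h2: "h2 a \<in> S" using hA a by blast+
        obtain M1 where M1: "M1 \<in> S" "C \<otimes> h1 a = h1 a \<otimes> M1" using hA a by blast
        obtain M2 where M2: "M2 \<in> S" "C \<otimes> h2 a = h2 a \<otimes> M2" using hA a by blast
        have "lmid R q (h1 a \<ominus> h2 a) ?N C = lmid R q (h1 a) ?N C \<ominus> lmid R q (h2 a) ?N C"
          using lmid_minus[OF q _ _ C, of "h1 a" "h2 a"] h1 h2 Ssub by (simp add: subset_iff)
        also have "\<dots> = h1 a \<otimes> left_eval R q M1 \<ominus> h2 a \<otimes> left_eval R q M2"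
        proof -
          have c: "h1 a \<in> carrier R" "h2 a \<in> carrier R" "M1 \<in> carrier R" "M2 \<in> carrier R"
            using h1 h2 M1 M2 Ssub by blast+
          show ?thesis using lmid_inter[OF q C c(1) c(3) M1(2) dq] lmid_inter[OF q C c(2) c(4) M2(2) dq] by simp
        qed
        also have "\<dots> \<in> S"
          unfolding a_minus_def using qI M1 M2 h1 h2 by (intro Sadd Sneg Smul) auto
        finally show "lmid R q (h1 a \<ominus> h2 a) ?N C \<in> S" .
      qed
      have "(\<Oplus>a\<in>A. lmid R q (h1 a \<ominus> h2 a) ?N C) \<in> S" by (rule S_finsum[OF Ssub S0 Sadd A all])
      then show ?thesis using eq by simp
    qed
    then show ?thesis using p q P.m_closed by blast
  qed
qed

end


lemma mult_entry:
  assumes "A \<in> carrier_mat n n" "B \<in> carrier_mat n n" "r < n" "s < n"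
  shows "(A * B) $$ (r, s) = (\<Sum>t\<in>{0..<n}. A $$ (r, t) * B $$ (t, s))"
  using assms by (simp add: scalar_prod_def)

lemma sum_single:
  assumes "finite A" "\<And>t. t \<in> A \<Longrightarrow> t \<noteq> z \<Longrightarrow> g t = (0::'a::comm_monoid_add)"
  shows "sum g A = (if z \<in> A then g z else 0)"
proof (cases "z \<in> A")
  case True
  then have "sum g A = g z + sum g (A - {z})" using assms(1) by (simp add: sum.remove)
  also have "sum g (A - {z}) = 0" using assms by (intro sum.neutral) auto
  finally show ?thesis using True by simp
next
  case False
  then show ?thesis using assms by (auto intro!: sum.neutral)
qed

lemma ut_add: "A \<in> upper_tri_mats n D \<Longrightarrow> B \<in> upper_tri_mats n D \<Longrightarrow> (\<forall>x\<in>D. \<forall>y\<in>D. x + y \<in> D)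
  \<Longrightarrow> A + B \<in> upper_tri_mats n (D :: 'a :: ring_1 set)"
  unfolding upper_tri_mats_def by auto

lemma ut_uminus: "A \<in> upper_tri_mats n D \<Longrightarrow> (\<forall>x\<in>D. - x \<in> D)
  \<Longrightarrow> - A \<in> upper_tri_mats n (D :: 'a :: ring_1 set)"
  unfolding upper_tri_mats_def by (auto simp: uminus_carrier_mat)

lemma ut_one: "0 \<in> D \<Longrightarrow> 1 \<in> D \<Longrightarrow> 1\<^sub>m n \<in> upper_tri_mats n (D :: 'a :: ring_1 set)"
  unfolding upper_tri_mats_def by auto

lemma sum_in:
  assumes "0 \<in> D" "\<forall>x\<in>D. \<forall>y\<in>D. x + y \<in> D" "finite F" "\<And>x. x \<in> F \<Longrightarrow> f x \<in> D"
  shows "sum f F \<in> D"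
  using assms(3,4) by (induction F rule: finite_induct) (use assms(1,2) in auto)

lemma ut_mult:
  assumes A: "A \<in> upper_tri_mats n D" and B: "B \<in> upper_tri_mats n D"
    and D: "0 \<in> D" "\<forall>x\<in>D. \<forall>y\<in>D. x + y \<in> D" "\<forall>x\<in>D. \<forall>y\<in>D. x * y \<in> D"
  shows "A * B \<in> upper_tri_mats n (D :: 'a :: ring_1 set)"
proof -
  have Ac: "A \<in> carrier_mat n n" and Bc: "B \<in> carrier_mat n n"
    and Ae: "\<And>i j. i < n \<Longrightarrow> j < n \<Longrightarrow> A $$ (i, j) \<in> D" and Be: "\<And>i j. i < n \<Longrightarrow> j < n \<Longrightarrow> B $$ (i, j) \<in> D"
    and Az: "\<And>i j. i < n \<Longrightarrow> j < i \<Longrightarrow> A $$ (i, j) = 0" and Bz: "\<And>i j. i < n \<Longrightarrow> j < i \<Longrightarrow> B $$ (i, j) = 0"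
    using A B unfolding upper_tri_mats_def by auto
  have "(A * B) $$ (i, j) \<in> D" if "i < n" "j < n" for i j
    unfolding mult_entry[OF Ac Bc that] by (rule sum_in) (use D Ae Be that in auto)
  moreover have "(A * B) $$ (i, j) = 0" if "i < n" "j < i" for i j
  proof -
    have "(A * B) $$ (i, j) = (\<Sum>t\<in>{0..<n}. A $$ (i, t) * B $$ (t, j))"
      using mult_entry[OF Ac Bc] that by simp
    also have "\<dots> = 0"
    proof (rule sum.neutral, intro ballI)
      fix t assume t: "t \<in> {0..<n}"
      show "A $$ (i, t) * B $$ (t, j) = 0"
      proof (cases "t < i")
        case True then show ?thesis using Az that by simp
      next
        case False then show ?thesis using Bz that t by simp
      qed
    qed
    finally show ?thesis .
  qed
  ultimately show ?thesis using Ac Bc unfolding upper_tri_mats_def by auto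
qed

lemma Tn_simps:
  "carrier (Tn_ring n) = upper_tri_mats n UNIV"
  "mult (Tn_ring n) = (*)" "add (Tn_ring n) = (+)"
  "one (Tn_ring n) = 1\<^sub>m n" "zero (Tn_ring n) = 0\<^sub>m n n"
  unfolding Tn_ring_def ring_mat_def by simp_all

lemma Tn_ring: "ring (Tn_ring n :: 'a :: comm_ring_1 mat ring)"
proof -
  interpret RM: ring "ring_mat TYPE('a) n ()" by (rule ring_mat)
  have sr: "subring (upper_tri_mats n UNIV) (ring_mat TYPE('a) n ())"
  proof (rule RM.subringI)
    show "upper_tri_mats n UNIV \<subseteq> carrier (ring_mat TYPE('a) n ())"
      unfolding upper_tri_mats_def ring_mat_def by auto
    show "\<one>\<^bsub>ring_mat TYPE('a) n ()\<^esub> \<in> upper_tri_mats n UNIV"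
      unfolding ring_mat_def using ut_one[of UNIV n] by simp
    show "\<ominus>\<^bsub>ring_mat TYPE('a) n ()\<^esub> h \<in> upper_tri_mats n UNIV" if h: "h \<in> upper_tri_mats n UNIV" for h
    proof -
      have hc: "h \<in> carrier_mat n n" using h unfolding upper_tri_mats_def by auto
      have "\<ominus>\<^bsub>ring_mat TYPE('a) n ()\<^esub> h = - h"
        by (rule RM.minus_equality) (use hc in \<open>auto simp: ring_mat_def uminus_carrier_mat\<close>)
      then show ?thesis using ut_uminus[OF h] by simp
    qed
    show "h1 \<otimes>\<^bsub>ring_mat TYPE('a) n ()\<^esub> h2 \<in> upper_tri_mats n UNIV"
      if "h1 \<in> upper_tri_mats n UNIV" "h2 \<in> upper_tri_mats n UNIV" for h1 h2
      using ut_mult[OF that] by (simp add: ring_mat_def)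
    show "h1 \<oplus>\<^bsub>ring_mat TYPE('a) n ()\<^esub> h2 \<in> upper_tri_mats n UNIV"
      if "h1 \<in> upper_tri_mats n UNIV" "h2 \<in> upper_tri_mats n UNIV" for h1 h2
      using ut_add[OF that] by (simp add: ring_mat_def)
  qed
  show ?thesis unfolding Tn_ring_def by (rule RM.subring_is_ring[OF sr])
qed

lemma Tn_neg: "X \<in> carrier (Tn_ring n) \<Longrightarrow> \<ominus>\<^bsub>Tn_ring n\<^esub> X = - (X :: 'a :: comm_ring_1 mat)"
proof -
  assume X: "X \<in> carrier (Tn_ring n)"
  interpret T: ring "Tn_ring n :: 'a mat ring" by (rule Tn_ring)
  have Xc: "X \<in> carrier_mat n n" using X unfolding Tn_simps upper_tri_mats_def by auto
  have "- X \<in> carrier (Tn_ring n)" using X ut_uminus[of X n UNIV] by (simp add: Tn_simps)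
  then show ?thesis
    by (intro T.minus_equality) (use X Xc in \<open>auto simp: Tn_simps\<close>)
qed


definition Jm :: "nat \<Rightarrow> nat \<Rightarrow> nat \<Rightarrow> 'a::comm_ring_1 \<Rightarrow> 'a mat" where
  "Jm n i j b = mat n n (\<lambda>(r, s). if i \<le> r \<and> r + j = s + i then b else 0)"
definition JM :: "nat \<Rightarrow> nat \<Rightarrow> nat \<Rightarrow> 'a::comm_ring_1 mat \<Rightarrow> 'a mat" where
  "JM n i j C = mat n n (\<lambda>(r, s). if i \<le> r \<and> i \<le> s \<and> r + j - i < n \<and> s + j - i < n
      then C $$ (r + j - i, s + j - i) else 0)"
definition Km :: "nat \<Rightarrow> nat \<Rightarrow> nat \<Rightarrow> 'a::comm_ring_1 \<Rightarrow> 'a mat" where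
  "Km n i j b = mat n n (\<lambda>(r, s). if r \<le> i \<and> r + j = s + i then b else 0)"
definition KM :: "nat \<Rightarrow> nat \<Rightarrow> nat \<Rightarrow> 'a::comm_ring_1 mat \<Rightarrow> 'a mat" where
  "KM n i j C = mat n n (\<lambda>(r, s). if r \<le> j \<and> s \<le> j \<and> j - i \<le> r \<and> j - i \<le> s
      then C $$ (r + i - j, s + i - j) else 0)"

lemma Jm_mult:
  assumes C: "C \<in> carrier_mat n n" and rs: "r < n" "s < n" and ij: "i \<le> j"
  shows "(Jm n i j b * C) $$ (r, s) = (if i \<le> r \<and> r + j - i < n then b * C $$ (r + j - i, s) else 0)"
proof -
  have "(Jm n i j b * C) $$ (r, s) = (\<Sum>t\<in>{0..<n}. Jm n i j b $$ (r, t) * C $$ (t, s))"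
    by (rule mult_entry) (use C rs in \<open>auto simp: Jm_def\<close>)
  also have "\<dots> = (if r + j - i \<in> {0..<n} then Jm n i j b $$ (r, r + j - i) * C $$ (r + j - i, s) else 0)"
    by (rule sum_single) (use rs ij in \<open>auto simp: Jm_def\<close>)
  also have "\<dots> = (if i \<le> r \<and> r + j - i < n then b * C $$ (r + j - i, s) else 0)"
    using rs ij by (auto simp: Jm_def)
  finally show ?thesis .
qed

lemma JM_mult:
  assumes C: "C \<in> carrier_mat n n" and rs: "r < n" "s < n" and ij: "i \<le> j"
  shows "(JM n i j C * Jm n i j b) $$ (r, s) = (if j \<le> s \<and> i \<le> r \<and> r + j - i < n then C $$ (r + j - i, s) * b else 0)"
proof -
  have "(JM n i j C * Jm n i j b) $$ (r, s) = (\<Sum>t\<in>{0..<n}. JM n i j C $$ (r, t) * Jm n i j b $$ (t, s))"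
    by (rule mult_entry) (use C rs in \<open>auto simp: Jm_def JM_def\<close>)
  also have "\<dots> = (if s + i - j \<in> {0..<n} then JM n i j C $$ (r, s + i - j) * Jm n i j b $$ (s + i - j, s) else 0)"
    by (rule sum_single) (use rs ij in \<open>auto simp: Jm_def\<close>)
  also have "\<dots> = (if j \<le> s \<and> i \<le> r \<and> r + j - i < n then C $$ (r + j - i, s) * b else 0)"
    using rs ij by (auto simp: Jm_def JM_def)
  finally show ?thesis .
qed

lemma Km_mult:
  assumes C: "C \<in> carrier_mat n n" and rs: "r < n" "s < n" and ij: "i \<le> j"
  shows "(C * Km n i j b) $$ (r, s) = (if j - i \<le> s \<and> s \<le> j then C $$ (r, s + i - j) * b else 0)"
proof -
  have "(C * Km n i j b) $$ (r, s) = (\<Sum>t\<in>{0..<n}. C $$ (r, t) * Km n i j b $$ (t, s))"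
    by (rule mult_entry) (use C rs in \<open>auto simp: Km_def\<close>)
  also have "\<dots> = (if s + i - j \<in> {0..<n} then C $$ (r, s + i - j) * Km n i j b $$ (s + i - j, s) else 0)"
    by (rule sum_single) (use rs ij in \<open>auto simp: Km_def\<close>)
  also have "\<dots> = (if j - i \<le> s \<and> s \<le> j then C $$ (r, s + i - j) * b else 0)"
    using rs ij by (auto simp: Km_def)
  finally show ?thesis .
qed

lemma KM_mult:
  assumes C: "C \<in> carrier_mat n n" and rs: "r < n" "s < n" and ij: "i \<le> j" "j < n"
  shows "(Km n i j b * KM n i j C) $$ (r, s) = (if r \<le> i \<and> j - i \<le> s \<and> s \<le> j then b * C $$ (r, s + i - j) else 0)"
proof -
  have "(Km n i j b * KM n i j C) $$ (r, s) = (\<Sum>t\<in>{0..<n}. Km n i j b $$ (r, t) * KM n i j C $$ (t, s))"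
    by (rule mult_entry) (use C rs in \<open>auto simp: Km_def KM_def\<close>)
  also have "\<dots> = (if r + j - i \<in> {0..<n} then Km n i j b $$ (r, r + j - i) * KM n i j C $$ (r + j - i, s) else 0)"
    by (rule sum_single) (use rs ij in \<open>auto simp: Km_def\<close>)
  also have "\<dots> = (if r \<le> i \<and> j - i \<le> s \<and> s \<le> j then b * C $$ (r, s + i - j) else 0)"
    using rs ij by (auto simp: Km_def KM_def)
  finally show ?thesis .
qed


lemma ut_D: "C \<in> upper_tri_mats n D \<Longrightarrow> C \<in> carrier_mat n n \<and> (\<forall>i<n. \<forall>j<n. C $$ (i, j) \<in> D) \<and> (\<forall>i<n. \<forall>j<i. C $$ (i, j) = 0)"
  unfolding upper_tri_mats_def by auto

lemma Jm_inter:
  assumes C: "C \<in> upper_tri_mats n D" and ij: "i \<le> j"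
  shows "Jm n i j b * C = JM n i j C * Jm n i j (b :: 'a :: comm_ring_1)"
proof -
  have Cc: "C \<in> carrier_mat n n" and Cz: "\<And>r s. r < n \<Longrightarrow> s < r \<Longrightarrow> C $$ (r, s) = 0"
    using ut_D[OF C] by auto
  show ?thesis
  proof (rule eq_matI)
    fix r s assume r: "r < dim_row (JM n i j C * Jm n i j b)" and s: "s < dim_col (JM n i j C * Jm n i j b)"
    then have rs: "r < n" "s < n" by (auto simp: JM_def Jm_def)
    show "(Jm n i j b * C) $$ (r, s) = (JM n i j C * Jm n i j b) $$ (r, s)"
      unfolding Jm_mult[OF Cc rs ij] JM_mult[OF Cc rs ij]
      using Cz[of "r + j - i" s] ij rs by (auto simp: mult.commute)
  qed (use Cc in \<open>auto simp: Jm_def JM_def\<close>)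
qed

lemma Km_inter:
  assumes C: "C \<in> upper_tri_mats n D" and ij: "i \<le> j" "j < n"
  shows "C * Km n i j b = Km n i j b * KM n i j (C :: 'a :: comm_ring_1 mat)"
proof -
  have Cc: "C \<in> carrier_mat n n" and Cz: "\<And>r s. r < n \<Longrightarrow> s < r \<Longrightarrow> C $$ (r, s) = 0"
    using ut_D[OF C] by auto
  show ?thesis
  proof (rule eq_matI)
    fix r s assume r: "r < dim_row (Km n i j b * KM n i j C)" and s: "s < dim_col (Km n i j b * KM n i j C)"
    then have rs: "r < n" "s < n" by (auto simp: KM_def Km_def)
    show "(C * Km n i j b) $$ (r, s) = (Km n i j b * KM n i j C) $$ (r, s)"
      unfolding Km_mult[OF Cc rs ij(1)] KM_mult[OF Cc rs ij]
      using Cz[of r "s + i - j"] ij rs by (auto simp: mult.commute)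
  qed (use Cc in \<open>auto simp: Km_def KM_def\<close>)
qed

lemma Jm_in: "b \<in> D \<Longrightarrow> 0 \<in> D \<Longrightarrow> i \<le> j \<Longrightarrow> Jm n i j b \<in> upper_tri_mats n D"
  unfolding upper_tri_mats_def Jm_def by auto
lemma Km_in: "b \<in> D \<Longrightarrow> 0 \<in> D \<Longrightarrow> i \<le> j \<Longrightarrow> Km n i j b \<in> upper_tri_mats n D"
  unfolding upper_tri_mats_def Km_def by auto
lemma JM_in: "C \<in> upper_tri_mats n D \<Longrightarrow> 0 \<in> D \<Longrightarrow> JM n i j C \<in> upper_tri_mats n D"
  unfolding upper_tri_mats_def JM_def by auto
lemma KM_in: "C \<in> upper_tri_mats n D \<Longrightarrow> 0 \<in> D \<Longrightarrow> i \<le> j \<Longrightarrow> j < n \<Longrightarrow> KM n i j C \<in> upper_tri_mats n D"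
  unfolding upper_tri_mats_def KM_def by auto


lemma Tn_finsum:
  assumes A: "finite A" and h: "h \<in> A \<rightarrow> carrier (Tn_ring n :: 'a :: comm_ring_1 mat ring)"
  shows "finsum (Tn_ring n) h A \<in> carrier_mat n n \<and>
    (\<forall>r<n. \<forall>s<n. finsum (Tn_ring n) h A $$ (r, s) = (\<Sum>a\<in>A. h a $$ (r, s)))"
  using A h
proof (induction A rule: finite_induct)
  case empty
  interpret T: ring "Tn_ring n :: 'a :: comm_ring_1 mat ring" by (rule Tn_ring)
  show ?case by (simp add: Tn_simps)
next
  case (insert x F)
  interpret T: ring "Tn_ring n :: 'a :: comm_ring_1 mat ring" by (rule Tn_ring)
  have hx: "h x \<in> carrier (Tn_ring n)" and hF: "h \<in> F \<rightarrow> carrier (Tn_ring n)" using insert by auto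
  have e: "finsum (Tn_ring n) h (insert x F) = h x + finsum (Tn_ring n) h F"
    using T.finsum_insert[OF insert(1,2) hF hx] by (simp add: Tn_simps)
  have hxc: "h x \<in> carrier_mat n n" using hx unfolding Tn_simps upper_tri_mats_def by auto
  show ?case using insert.IH[OF hF] hxc insert(1,2) unfolding e by auto
qed

lemma Tn_minus: "X \<in> carrier (Tn_ring n) \<Longrightarrow> Y \<in> carrier (Tn_ring n) \<Longrightarrow>
  X \<ominus>\<^bsub>Tn_ring n\<^esub> Y = X + - (Y :: 'a :: comm_ring_1 mat)"
  unfolding a_minus_def by (simp add: Tn_neg Tn_simps)

lemma Jm_diff:
  assumes "r < n" "s < n" "i \<le> j"
  shows "(Jm n i j b + - Jm n (i+1) (j+1) b) $$ (r, s) = (if (i, j) = (r, s) then b else 0)"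
  using assms by (auto simp: Jm_def)

lemma Km_diff:
  assumes "r < n" "s < n" "i \<le> j"
  shows "(Km n i j b + - (if i = 0 then 0\<^sub>m n n else Km n (i - 1) (j - 1) b)) $$ (r, s) = (if (i, j) = (r, s) then b else 0)"
  using assms by (auto simp: Km_def)

definition pairsA :: "nat \<Rightarrow> (nat \<times> nat) set" where
  "pairsA n = {a. fst a \<le> snd a \<and> snd a < n}"

lemma pairsA_finite: "finite (pairsA n)"
proof -
  have "pairsA n \<subseteq> {..<n} \<times> {..<n}" unfolding pairsA_def by auto
  then show ?thesis by (rule finite_subset) auto
qed

lemma decomp:
  assumes B: "B \<in> upper_tri_mats n D" and hc: "\<And>a. a \<in> pairsA n \<Longrightarrow> h1 a \<in> carrier (Tn_ring n) \<and> h2 a \<in> carrier (Tn_ring n)"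
    and hd: "\<And>a r s. a \<in> pairsA n \<Longrightarrow> r < n \<Longrightarrow> s < n \<Longrightarrow> (h1 a + - h2 a) $$ (r, s) = (if a = (r, s) then B $$ a else 0)"
  shows "B = (\<Oplus>\<^bsub>Tn_ring n\<^esub> a\<in>pairsA n. h1 a \<ominus>\<^bsub>Tn_ring n\<^esub> h2 a)"
proof -
  interpret T: ring "Tn_ring n :: 'a :: comm_ring_1 mat ring" by (rule Tn_ring)
  have Bc: "B \<in> carrier_mat n n" and Bz: "\<And>r s. r < n \<Longrightarrow> s < r \<Longrightarrow> B $$ (r, s) = 0"
    using ut_D[OF B] by auto
  have hc': "(\<lambda>a. h1 a \<ominus>\<^bsub>Tn_ring n\<^esub> h2 a) \<in> pairsA n \<rightarrow> carrier (Tn_ring n)"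
    using hc by auto
  note F = Tn_finsum[OF pairsA_finite hc']
  show ?thesis
  proof (rule eq_matI)
    fix r s assume "r < dim_row (\<Oplus>\<^bsub>Tn_ring n\<^esub> a\<in>pairsA n. h1 a \<ominus>\<^bsub>Tn_ring n\<^esub> h2 a)"
      "s < dim_col (\<Oplus>\<^bsub>Tn_ring n\<^esub> a\<in>pairsA n. h1 a \<ominus>\<^bsub>Tn_ring n\<^esub> h2 a)"
    then have rs: "r < n" "s < n" using F by auto
    have "(\<Oplus>\<^bsub>Tn_ring n\<^esub> a\<in>pairsA n. h1 a \<ominus>\<^bsub>Tn_ring n\<^esub> h2 a) $$ (r, s)
        = (\<Sum>a\<in>pairsA n. (h1 a \<ominus>\<^bsub>Tn_ring n\<^esub> h2 a) $$ (r, s))" using F rs by auto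
    also have "\<dots> = (\<Sum>a\<in>pairsA n. (if a = (r, s) then B $$ a else 0))"
    proof (rule sum.cong)
      fix a assume a: "a \<in> pairsA n"
      have "h1 a \<ominus>\<^bsub>Tn_ring n\<^esub> h2 a = h1 a + - h2 a" using hc[OF a] Tn_minus by blast
      then show "(h1 a \<ominus>\<^bsub>Tn_ring n\<^esub> h2 a) $$ (r, s) = (if a = (r, s) then B $$ a else 0)"
        using hd[OF a rs] by simp
    qed simp
    also have "\<dots> = (if (r, s) \<in> pairsA n then B $$ (r, s) else 0)"
      using sum_single[OF pairsA_finite[of n], where g="\<lambda>a. if a = (r, s) then B $$ a else 0" and z="(r, s)"] by simp
    also have "\<dots> = B $$ (r, s)" using Bz[of r s] rs by (auto simp: pairsA_def)
    finally show "B $$ (r, s) = (\<Oplus>\<^bsub>Tn_ring n\<^esub> a\<in>pairsA n. h1 a \<ominus>\<^bsub>Tn_ring n\<^esub> h2 a) $$ (r, s)" by simp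
  qed (use Bc F in auto)
qed


theorem theorem5p4:
  fixes D :: "'k::field set" and n :: nat
  assumes "quotient_field_of D" and "n \<ge> 1"
  shows "subring (Int_right n D) (UP (Tn_ring n :: 'k mat ring))
       \<and> subring (Int_left n D) (UP (Tn_ring n :: 'k mat ring))"
proof -
  have D0: "0 \<in> D" and D1: "1 \<in> D" and Dadd: "\<forall>x\<in>D. \<forall>y\<in>D. x + y \<in> D"
    and Dneg: "\<forall>x\<in>D. - x \<in> D" and Dmul: "\<forall>x\<in>D. \<forall>y\<in>D. x * y \<in> D"
    using assms(1) unfolding quotient_field_of_def by auto
  interpret T: ring "Tn_ring n :: 'k mat ring" by (rule Tn_ring)
  interpret U: UP_ring "Tn_ring n :: 'k mat ring" "UP (Tn_ring n)"
    by (rule UP_ring.intro) (rule Tn_ring)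
  let ?S = "upper_tri_mats n D :: 'k mat set"
  have Ssub: "?S \<subseteq> carrier (Tn_ring n)" unfolding Tn_simps upper_tri_mats_def by auto
  have S1: "\<one>\<^bsub>Tn_ring n\<^esub> \<in> ?S" unfolding Tn_simps using ut_one[OF D0 D1] .
  have Sadd: "x \<oplus>\<^bsub>Tn_ring n\<^esub> y \<in> ?S" if "x \<in> ?S" "y \<in> ?S" for x y
    unfolding Tn_simps using ut_add[OF that Dadd] .
  have Smul: "x \<otimes>\<^bsub>Tn_ring n\<^esub> y \<in> ?S" if "x \<in> ?S" "y \<in> ?S" for x y
    unfolding Tn_simps using ut_mult[OF that D0 Dadd Dmul] .
  have Sneg: "\<ominus>\<^bsub>Tn_ring n\<^esub> x \<in> ?S" if "x \<in> ?S" for x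
  proof -
    have "\<ominus>\<^bsub>Tn_ring n\<^esub> x = - x" using Tn_neg that Ssub by blast
    then show ?thesis using ut_uminus[OF that Dneg] by simp
  qed
  have Be: "B $$ a \<in> D" if "B \<in> ?S" "a \<in> pairsA n" for B a
    using that unfolding upper_tri_mats_def pairsA_def by (cases a) auto
  have decR: "\<exists>(A::(nat\<times>nat) set) h1 h2. finite A \<and>
       (\<forall>a\<in>A. h1 a \<in> ?S \<and> h2 a \<in> ?S \<and> (\<exists>M\<in>?S. h1 a \<otimes>\<^bsub>Tn_ring n\<^esub> C = M \<otimes>\<^bsub>Tn_ring n\<^esub> h1 a)
          \<and> (\<exists>M\<in>?S. h2 a \<otimes>\<^bsub>Tn_ring n\<^esub> C = M \<otimes>\<^bsub>Tn_ring n\<^esub> h2 a))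
       \<and> B = (\<Oplus>\<^bsub>Tn_ring n\<^esub>a\<in>A. h1 a \<ominus>\<^bsub>Tn_ring n\<^esub> h2 a)" if B: "B \<in> ?S" and C: "C \<in> ?S" for B C
  proof (intro exI conjI)
    let ?h1 = "\<lambda>a. Jm n (fst a) (snd a) (B $$ a)"
    let ?h2 = "\<lambda>a. Jm n (fst a + 1) (snd a + 1) (B $$ a)"
    show "finite (pairsA n)" by (rule pairsA_finite)
    show "\<forall>a\<in>pairsA n. ?h1 a \<in> ?S \<and> ?h2 a \<in> ?S \<and> (\<exists>M\<in>?S. ?h1 a \<otimes>\<^bsub>Tn_ring n\<^esub> C = M \<otimes>\<^bsub>Tn_ring n\<^esub> ?h1 a)
          \<and> (\<exists>M\<in>?S. ?h2 a \<otimes>\<^bsub>Tn_ring n\<^esub> C = M \<otimes>\<^bsub>Tn_ring n\<^esub> ?h2 a)"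
    proof
      fix a assume a: "a \<in> pairsA n"
      have ij: "fst a \<le> snd a" using a unfolding pairsA_def by auto
      have b: "B $$ a \<in> D" using Be[OF B a] .
      show "?h1 a \<in> ?S \<and> ?h2 a \<in> ?S \<and> (\<exists>M\<in>?S. ?h1 a \<otimes>\<^bsub>Tn_ring n\<^esub> C = M \<otimes>\<^bsub>Tn_ring n\<^esub> ?h1 a)
          \<and> (\<exists>M\<in>?S. ?h2 a \<otimes>\<^bsub>Tn_ring n\<^esub> C = M \<otimes>\<^bsub>Tn_ring n\<^esub> ?h2 a)"
        unfolding Tn_simps
        using Jm_in[OF b D0, of "fst a" "snd a" n] Jm_in[OF b D0, of "fst a + 1" "snd a + 1" n] ij
          Jm_inter[OF C ij, of "B $$ a"] Jm_inter[OF C, of "fst a + 1" "snd a + 1" "B $$ a"]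
          JM_in[OF C D0, of "fst a" "snd a"] JM_in[OF C D0, of "fst a + 1" "snd a + 1"]
        by auto
    qed
    show "B = (\<Oplus>\<^bsub>Tn_ring n\<^esub>a\<in>pairsA n. ?h1 a \<ominus>\<^bsub>Tn_ring n\<^esub> ?h2 a)"
    proof (rule decomp[OF B])
      fix a assume a: "a \<in> pairsA n"
      have ij: "fst a \<le> snd a" using a unfolding pairsA_def by auto
      have b: "B $$ a \<in> D" using Be[OF B a] .
      show "?h1 a \<in> carrier (Tn_ring n) \<and> ?h2 a \<in> carrier (Tn_ring n)"
        using Jm_in[OF b D0, of "fst a" "snd a" n] Jm_in[OF b D0, of "fst a + 1" "snd a + 1" n] ij Ssub by auto
    next
      fix a r s assume a: "a \<in> pairsA n" and rs: "r < n" "s < n"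
      have ij: "fst a \<le> snd a" using a unfolding pairsA_def by auto
      show "(?h1 a + - ?h2 a) $$ (r, s) = (if a = (r, s) then B $$ a else 0)"
        using Jm_diff[OF rs ij, of "B $$ a"] by (cases a) simp
    qed
  qed
  have decL: "\<exists>(A::(nat\<times>nat) set) h1 h2. finite A \<and>
       (\<forall>a\<in>A. h1 a \<in> ?S \<and> h2 a \<in> ?S \<and> (\<exists>M\<in>?S. C \<otimes>\<^bsub>Tn_ring n\<^esub> h1 a = h1 a \<otimes>\<^bsub>Tn_ring n\<^esub> M)
          \<and> (\<exists>M\<in>?S. C \<otimes>\<^bsub>Tn_ring n\<^esub> h2 a = h2 a \<otimes>\<^bsub>Tn_ring n\<^esub> M))
       \<and> B = (\<Oplus>\<^bsub>Tn_ring n\<^esub>a\<in>A. h1 a \<ominus>\<^bsub>Tn_ring n\<^esub> h2 a)" if B: "B \<in> ?S" and C: "C \<in> ?S" for B C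
  proof (intro exI conjI)
    let ?h1 = "\<lambda>a. Km n (fst a) (snd a) (B $$ a)"
    let ?h2 = "\<lambda>a. if fst a = 0 then 0\<^sub>m n n else Km n (fst a - 1) (snd a - 1) (B $$ a)"
    have Cc: "C \<in> carrier_mat n n" using ut_D[OF C] by auto
    have Z: "0\<^sub>m n n \<in> ?S" using D0 unfolding upper_tri_mats_def by auto
    show "finite (pairsA n)" by (rule pairsA_finite)
    show "\<forall>a\<in>pairsA n. ?h1 a \<in> ?S \<and> ?h2 a \<in> ?S \<and> (\<exists>M\<in>?S. C \<otimes>\<^bsub>Tn_ring n\<^esub> ?h1 a = ?h1 a \<otimes>\<^bsub>Tn_ring n\<^esub> M)
          \<and> (\<exists>M\<in>?S. C \<otimes>\<^bsub>Tn_ring n\<^esub> ?h2 a = ?h2 a \<otimes>\<^bsub>Tn_ring n\<^esub> M)"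
    proof
      fix a assume a: "a \<in> pairsA n"
      have ij: "fst a \<le> snd a" "snd a < n" using a unfolding pairsA_def by auto
      have b: "B $$ a \<in> D" using Be[OF B a] .
      have h1: "?h1 a \<in> ?S \<and> (\<exists>M\<in>?S. C \<otimes>\<^bsub>Tn_ring n\<^esub> ?h1 a = ?h1 a \<otimes>\<^bsub>Tn_ring n\<^esub> M)"
        unfolding Tn_simps
        using Km_in[OF b D0 ij(1), of n] Km_inter[OF C ij, of "B $$ a"] KM_in[OF C D0 ij] by auto
      have h2: "?h2 a \<in> ?S \<and> (\<exists>M\<in>?S. C \<otimes>\<^bsub>Tn_ring n\<^esub> ?h2 a = ?h2 a \<otimes>\<^bsub>Tn_ring n\<^esub> M)"
      proof (cases "fst a = 0")
        case True
        have "C * 0\<^sub>m n n = 0\<^sub>m n n * C" using Cc by simp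
        then show ?thesis unfolding Tn_simps using True Z C by auto
      next
        case False
        have ij': "fst a - 1 \<le> snd a - 1" "snd a - 1 < n" using ij by auto
        show ?thesis
          unfolding Tn_simps
          using False Km_in[OF b D0 ij'(1), of n] Km_inter[OF C ij', of "B $$ a"] KM_in[OF C D0 ij'] by auto
      qed
      show "?h1 a \<in> ?S \<and> ?h2 a \<in> ?S \<and> (\<exists>M\<in>?S. C \<otimes>\<^bsub>Tn_ring n\<^esub> ?h1 a = ?h1 a \<otimes>\<^bsub>Tn_ring n\<^esub> M)
          \<and> (\<exists>M\<in>?S. C \<otimes>\<^bsub>Tn_ring n\<^esub> ?h2 a = ?h2 a \<otimes>\<^bsub>Tn_ring n\<^esub> M)"
        using h1 h2 by blast
    qed
    show "B = (\<Oplus>\<^bsub>Tn_ring n\<^esub>a\<in>pairsA n. ?h1 a \<ominus>\<^bsub>Tn_ring n\<^esub> ?h2 a)"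
    proof (rule decomp[OF B])
      fix a assume a: "a \<in> pairsA n"
      have ij: "fst a \<le> snd a" using a unfolding pairsA_def by auto
      have b: "B $$ a \<in> D" using Be[OF B a] .
      have "?h2 a \<in> ?S"
        using Z Km_in[OF b D0, of "fst a - 1" "snd a - 1" n] ij by auto
      then show "?h1 a \<in> carrier (Tn_ring n) \<and> ?h2 a \<in> carrier (Tn_ring n)"
        using Km_in[OF b D0 ij, of n] Ssub by auto
    next
      fix a r s assume a: "a \<in> pairsA n" and rs: "r < n" "s < n"
      have ij: "fst a \<le> snd a" using a unfolding pairsA_def by auto
      show "(?h1 a + - ?h2 a) $$ (r, s) = (if a = (r, s) then B $$ a else 0)"
        using Km_diff[OF rs ij, of "B $$ a"] by (cases a) simp
    qed
  qed
  have R: "subring {f \<in> carrier (UP (Tn_ring n)). \<forall>C\<in>?S. right_eval (Tn_ring n) f C \<in> ?S} (UP (Tn_ring n))"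
    by (rule U.abstract_right[OF Ssub S1 Sadd Smul Sneg decR])
  have L: "subring {f \<in> carrier (UP (Tn_ring n)). \<forall>C\<in>?S. left_eval (Tn_ring n) f C \<in> ?S} (UP (Tn_ring n))"
    by (rule U.abstract_left[OF Ssub S1 Sadd Smul Sneg decL])
  show ?thesis using R L unfolding Int_right_def Int_left_def by simp
qed

end
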